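(* Let $\mathcal{X}$ be a finite set of actions, $\mathcal{Y}$ a finite set of responses, $\mathcal{H}\subseteq \mathcal{Y}^{\mathcal{X}}$, and $\mathrm{cost}:\mathcal{X}\times\mathcal{Y}\to\mathbb{R}_+$. Let $f:2^{\mathcal{X}\times\mathcal{Y}}\to\mathbb{R}_+$, $Q>0$, $\eta>0$ be such that $f$ is monotone non-decreasing and submodular, $f(\emptyset)=0$, and for every $S\subseteq \mathcal{X}\times\mathcal{Y}$, $f(S)\ge Q-\eta$ implies $f(S)\ge Q$. Let $\alpha\ge 1$ and let $\mathcal{A}$ be an $\alpha$-approximate greedy algorithm for the utility function $u^f$. If $f$ is a learning objective for $\mathcal{H}$, then $$\mathrm{cost}(\mathcal{A}) \le r_{\mathrm{cost}}\cdot \alpha\,(\ln(Q/\eta)+1)\,\mathrm{OPT}.$$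
   Context: Interactive algorithms: the true (unknown) state is some $h^*\in\mathcal{H}$. An interactive algorithm $\mathcal{A}$ is a map that, given the set $S\subseteq\mathcal{X}\times\mathcal{Y}$ of action-response pairs observed so far, outputs either an action $\mathcal{A}(S)\in\mathcal{X}$ (which is then performed, yielding the pair $(x,h^*(x))$ added to $S$) or the symbol "terminate". $S^h[\mathcal{A}]$ denotes the set of pairs collected by $\mathcal{A}$ until termination when $h^*=h$. Performing action $x$ with response $y$ costs $\mathrm{cost}(x,y)$; $\mathrm{cost}(S)=\sum_{(x,y)\in S}\mathrm{cost}(x,y)$ and the worst-case cost is $\mathrm{cost}(\mathcal{A}):=\max_{h\in\mathcal{H}}\mathrm{cost}(S^h[\mathcal{A}])$. $\mathrm{OPT}:=\min_{\mathcal{A}}\mathrm{cost}(\mathcal{A})$, minimum over all interactive algorithms that satisfy $f(S^h[\mathcal{A}])\ge Q$ for all $h\in\mathcal{H}$ ($\mathrm{OPT}=\infty$ if none exists). Version space: $V(S)=\{h\in\mathcal{H}\mid \forall (x,y)\in S,\ y=h(x)\}$. For a set function $g$, $\delta_g(z\mid A):=g(A\cup\{z\})-g(A)$. The utility function is $u^f(x,S):=\min_{h\in V(S)} \frac{\delta_{\min(f,Q)}((x,h(x))\mid S)}{\mathrm{cost}(x,h(x))}$, where $\min(f,Q)$ is the function $S\mapsto\min(f(S),Q)$. An interactive algorithm $\mathcal{A}$ is an $\alpha$-approximate greedy algorithm for a utility $u:\mathcal{X}\times 2^{\mathcal{X}\times\mathcal{Y}}\to\mathbb{R}_+$ if for all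 $S$: if $f(S)\ge Q$ then $\mathcal{A}$ terminates on $S$, and otherwise $\mathcal{A}(S)\in\mathcal{X}$ with $u(\mathcal{A}(S),S)\ge \frac{1}{\alpha}\max_{x\in\mathcal{X}}u(x,S)$. $f$ is a learning objective for $\mathcal{H}$ if $f(S)=g(V(S))$ for some monotone non-increasing function $g$ (of subsets of $\mathcal{H}$). Second-smallest cost ratio: for $x\in\mathcal{X}$, $\phi(x)$ is the second-smallest value in the multiset $\{\mathrm{cost}(x,y)\mid y\in\mathcal{Y}\}$, and $r_{\mathrm{cost}}:=\max_{x\in\mathcal{X},y\in\mathcal{Y}}\frac{\mathrm{cost}(x,y)}{\phi(x)}$. *)

theory Defs
  imports Complex_Main "HOL-Library.Multiset" "HOL-Library.Extended_Real"
begin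

text \<open>Actions have type 'x, responses type 'y (both finite types).
 An interactive algorithm maps the observed set S to Some action or None (= terminate).\<close>

type_synonym ('x, 'y) ialg = "('x \<times> 'y) set \<Rightarrow> 'x option"

definition version_space :: "('x \<Rightarrow> 'y) set \<Rightarrow> ('x \<times> 'y) set \<Rightarrow> ('x \<Rightarrow> 'y) set" where
  "version_space H S = {h \<in> H. \<forall>(x, y) \<in> S. y = h x}"

definition set_cost :: "('x \<Rightarrow> 'y \<Rightarrow> real) \<Rightarrow> ('x \<times> 'y) set \<Rightarrow> real" where
  "set_cost cost S = (\<Sum>(x, y) \<in> S. cost x y)"

fun run :: "('x, 'y) ialg \<Rightarrow> ('x \<Rightarrow> 'y) \<Rightarrow> nat \<Rightarrow> ('x \<times> 'y) set" where
  "run A h 0 = {}"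
| "run A h (Suc n) = (case A (run A h n) of None \<Rightarrow> run A h n
                       | Some x \<Rightarrow> insert (x, h x) (run A h n))"

definition terminates :: "('x, 'y) ialg \<Rightarrow> ('x \<Rightarrow> 'y) \<Rightarrow> bool" where
  "terminates A h \<longleftrightarrow> (\<exists>n. A (run A h n) = None)"

text \<open>S^h[A]: the set collected by A until termination (meaningful when terminates A h).\<close>
definition collected :: "('x, 'y) ialg \<Rightarrow> ('x \<Rightarrow> 'y) \<Rightarrow> ('x \<times> 'y) set" where
  "collected A h = run A h (LEAST n. A (run A h n) = None)"

definition alg_cost :: "('x \<Rightarrow> 'y) set \<Rightarrow> ('x \<Rightarrow> 'y \<Rightarrow> real) \<Rightarrow> ('x, 'y) ialg \<Rightarrow> ereal" where
  "alg_cost H cost A =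
     (SUP h\<in>H. (if terminates A h then ereal (set_cost cost (collected A h)) else \<infinity>))"

definition OPT :: "('x \<Rightarrow> 'y) set \<Rightarrow> ('x \<Rightarrow> 'y \<Rightarrow> real) \<Rightarrow> (('x \<times> 'y) set \<Rightarrow> real) \<Rightarrow> real \<Rightarrow> ereal" where
  "OPT H cost f Q =
     (INF A\<in>{A. \<forall>h\<in>H. terminates A h \<and> f (collected A h) \<ge> Q}. alg_cost H cost A)"

text \<open>Utility u^f(x,S); for an inconsistent S (empty version space) we put 0
 (such S never arise, and the greedy condition is then trivially satisfied, as with the
 convention min over the empty set = +infinity).\<close>
definition utility :: "('x \<Rightarrow> 'y) set \<Rightarrow> ('x \<Rightarrow> 'y \<Rightarrow> real) \<Rightarrow> (('x \<times> 'y) set \<Rightarrow> real) \<Rightarrow> real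
                      \<Rightarrow> 'x \<Rightarrow> ('x \<times> 'y) set \<Rightarrow> real" where
  "utility H cost f Q x S =
     (if version_space H S = {} then 0
      else Min ((\<lambda>h. (min (f (insert (x, h x) S)) Q - min (f S) Q) / cost x (h x))
                 ` version_space H S))"

definition approx_greedy ::
  "('x::finite \<Rightarrow> 'y) set \<Rightarrow> ('x \<Rightarrow> 'y \<Rightarrow> real) \<Rightarrow> (('x \<times> 'y) set \<Rightarrow> real) \<Rightarrow> real \<Rightarrow> real
     \<Rightarrow> ('x, 'y) ialg \<Rightarrow> bool" where
  "approx_greedy H cost f Q \<alpha> A \<longleftrightarrow>
     (\<forall>S. (f S \<ge> Q \<longrightarrow> A S = None) \<and>
          (\<not> f S \<ge> Q \<longrightarrow> (\<exists>x. A S = Some x \<and>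
              utility H cost f Q x S \<ge> (1 / \<alpha>) * Max (range (\<lambda>x'. utility H cost f Q x' S)))))"

definition learning_objective :: "('x \<Rightarrow> 'y) set \<Rightarrow> (('x \<times> 'y) set \<Rightarrow> real) \<Rightarrow> bool" where
  "learning_objective H f \<longleftrightarrow>
     (\<exists>g :: ('x \<Rightarrow> 'y) set \<Rightarrow> real.
        (\<forall>A B. A \<subseteq> B \<longrightarrow> B \<subseteq> H \<longrightarrow> g B \<le> g A) \<and>
        (\<forall>S. f S = g (version_space H S)))"

definition submodular :: "('a set \<Rightarrow> real) \<Rightarrow> bool" where
  "submodular f \<longleftrightarrow> (\<forall>A B. f (A \<union> B) + f (A \<inter> B) \<le> f A + f B)"

definition phi :: "('x \<Rightarrow> 'y::finite \<Rightarrow> real) \<Rightarrow> 'x \<Rightarrow> real" where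
  "phi cost x = sorted_list_of_multiset (image_mset (cost x) (mset_set (UNIV :: 'y set))) ! 1"

definition r_cost :: "('x::finite \<Rightarrow> 'y::finite \<Rightarrow> real) \<Rightarrow> real" where
  "r_cost cost = Max {cost x y / phi cost x | x y. True}"

end

theory Submission
  imports Defs
begin


lemma run_mono_Suc: "run B h n \<subseteq> run B h (Suc n)"
  by (auto split: option.splits)

lemma run_mono: "n \<le> m \<Longrightarrow> run B h n \<subseteq> run B h m"
  by (induction m rule: dec_induct) (use run_mono_Suc in blast)+

lemma run_graph: "(x, y) \<in> run B h n \<Longrightarrow> y = h x"
  by (induction n) (auto split: option.splits)

lemma run_det:
  assumes "\<And>x y. (x,y) \<in> run B h1 n \<Longrightarrow> h2 x = y"
  shows "run B h2 n = run B h1 n"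
  using assms
proof (induction n)
  case 0 then show ?case by simp
next
  case (Suc n)
  have "\<And>x y. (x,y) \<in> run B h1 n \<Longrightarrow> h2 x = y"
  proof -
    fix x y assume "(x,y) \<in> run B h1 n"
    then have "(x,y) \<in> run B h1 (Suc n)" using run_mono_Suc[of B h1 n] by blast
    then show "h2 x = y" by (rule Suc.prems)
  qed
  then have IH: "run B h2 n = run B h1 n" using Suc.IH by blast
  show ?case
  proof (cases "B (run B h1 n)")
    case None then show ?thesis using IH by simp
  next
    case (Some x)
    then have "(x, h1 x) \<in> run B h1 (Suc n)" by simp
    then have "h2 x = h1 x" by (rule Suc.prems)
    then show ?thesis using IH Some by simp
  qed
qed

lemma run_stuck: assumes "B (run B h n) = None" "n \<le> m" shows "run B h m = run B h n"
  using assms(2) by (induction m rule: dec_induct) (use assms(1) in auto)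

lemma collected_eq:
  assumes "B (run B h n) = None"
  shows "collected B h = run B h n"
proof -
  let ?n0 = "LEAST n. B (run B h n) = None"
  have a: "B (run B h ?n0) = None" by (rule LeastI[of _ n]) (rule assms)
  have b: "?n0 \<le> n" by (rule Least_le) (rule assms)
  show ?thesis unfolding collected_def using run_stuck[of B h ?n0 n, OF a b] by simp
qed

lemma collected_sup:
  assumes "terminates B h" shows "run B h n \<subseteq> collected B h"
proof -
  obtain m where m: "B (run B h m) = None" using assms unfolding terminates_def by blast
  have "run B h n \<subseteq> run B h (max n m)" by (rule run_mono) simp
  also have "\<dots> = run B h m" by (rule run_stuck[of B h m, OF m]) simp
  finally show ?thesis using collected_eq[of B h m, OF m] by simp
qed

lemma run_fresh:
  assumes "terminates B h" "B (run B h n) = Some x"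
  shows "(x, h x) \<notin> run B h n"
proof
  assume in1: "(x, h x) \<in> run B h n"
  have st: "run B h m = run B h n" if "n \<le> m" for m
    using that
  proof (induction m rule: dec_induct)
    case base then show ?case by simp
  next
    case (step m) then show ?case using assms(2) in1 by (simp add: insert_absorb)
  qed
  obtain m where m: "B (run B h m) = None" using assms(1) unfolding terminates_def by blast
  show False
  proof (cases "n \<le> m")
    case True then show False using st[OF True] m assms(2) by simp
  next
    case False
    then have "run B h n = run B h m" using run_stuck[of B h m n, OF m] by simp
    then show False using m assms(2) by simp
  qed
qed

lemma run_card: fixes h :: "'x::finite \<Rightarrow> 'y" shows "card (run B h n) \<le> card (UNIV::'x set)"
proof -
  have "run B h n \<subseteq> (\<lambda>x. (x, h x)) ` UNIV" using run_graph by fastforce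
  then have "card (run B h n) \<le> card ((\<lambda>x. (x, h x)) ` (UNIV::'x set))" by (intro card_mono) auto
  also have "\<dots> \<le> card (UNIV::'x set)" by (rule card_image_le) simp
  finally show ?thesis .
qed

lemma set_cost_insert:
  "finite S \<Longrightarrow> (x,y) \<notin> S \<Longrightarrow> set_cost c (insert (x,y) S) = set_cost c S + c x y"
  unfolding set_cost_def by simp

lemma set_cost_mono:
  assumes "\<And>x y. c x y > 0" "finite T" "S \<subseteq> T"
  shows "set_cost c S \<le> set_cost c T"
  unfolding set_cost_def
  by (rule sum_mono2) (use assms in \<open>auto intro: less_imp_le\<close>)



context
  fixes cost :: "'x::finite \<Rightarrow> 'y::finite \<Rightarrow> real" and x :: 'x
  assumes card2: "card (UNIV :: 'y set) \<ge> 2"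
    and cpos: "\<And>x y. cost x y > 0"
begin

private definition "MM = image_mset (cost x) (mset_set (UNIV::'y set))"
private definition "LL = sorted_list_of_multiset MM"

private lemma LL_len: "length LL \<ge> 2"
proof -
  have "length LL = size MM" unfolding LL_def by (metis mset_sorted_list_of_multiset size_mset)
  also have "\<dots> = card (UNIV::'y set)" unfolding MM_def by simp
  finally show ?thesis using card2 by simp
qed

private lemma phi_LL: "phi cost x = LL ! 1"
  unfolding phi_def LL_def MM_def by simp

lemma phi_attained: "\<exists>y. cost x y = phi cost x"
proof -
  have "LL ! 1 \<in> set LL" using LL_len by simp
  then have "LL ! 1 \<in> set_mset MM" unfolding LL_def by simp
  then show ?thesis unfolding phi_LL MM_def by auto
qed

lemma phi_pos: "phi cost x > 0"
  using phi_attained cpos by metis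

lemma phi_two:
  assumes "y1 \<noteq> y2"
  shows "phi cost x \<le> cost x y1 \<or> phi cost x \<le> cost x y2"
proof (rule ccontr)
  assume "\<not> ?thesis"
  then have c: "cost x y1 < LL ! 1" "cost x y2 < LL ! 1" unfolding phi_LL by auto
  define b where "b = LL ! 1"
  obtain a rest where L: "LL = a # b # rest"
    using LL_len unfolding b_def
    by (metis One_nat_def Suc_1 Suc_le_length_iff nth_Cons_0 nth_Cons_Suc)
  have sorted: "sorted LL" unfolding LL_def by simp
  then have "\<forall>v\<in>set rest. b \<le> v" unfolding L by simp
  then have "filter (\<lambda>v. v < b) (b # rest) = []" by (simp add: filter_empty_conv not_less)
  then have "length (filter (\<lambda>v. v < b) LL) \<le> 1" unfolding L by simp
  moreover have "length (filter (\<lambda>v. v < b) LL) = size (filter_mset (\<lambda>v. v < b) MM)"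
    by (metis LL_def mset_filter mset_sorted_list_of_multiset size_mset)
  moreover have "filter_mset (\<lambda>v. v < b) MM = image_mset (cost x) (mset_set {y. cost x y < b})"
    unfolding MM_def filter_mset_image_mset by simp
  ultimately have "card {y. cost x y < b} \<le> 1" by simp
  moreover have "{y1, y2} \<subseteq> {y. cost x y < b}" using c unfolding b_def by auto
  then have "card {y1,y2} \<le> card {y. cost x y < b}" by (intro card_mono) auto
  ultimately show False using assms by simp
qed

end

lemma r_cost_ge:
  fixes cost :: "'x::finite \<Rightarrow> 'y::finite \<Rightarrow> real"
  shows "cost x y / phi cost x \<le> r_cost cost"
proof -
  have "{cost x y / phi cost x | x y. True} = (\<lambda>(x,y). cost x y / phi cost x) ` UNIV" by auto
  then have "finite {cost x y / phi cost x | x y. True}" by simp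
  then show ?thesis unfolding r_cost_def by (intro Max_ge) auto
qed

lemma r_cost_ge1:
  fixes cost :: "'x::finite \<Rightarrow> 'y::finite \<Rightarrow> real"
  assumes "card (UNIV :: 'y set) \<ge> 2" "\<And>x y. cost x y > 0"
  shows "r_cost cost \<ge> 1"
proof -
  fix x :: 'x
  obtain y where "cost x y = phi cost x" using phi_attained[where cost=cost and x=x, OF assms] by blast
  then have "cost x y / phi cost x = 1" using phi_pos[where cost=cost and x=x, OF assms] by simp
  then show ?thesis using r_cost_ge[of cost x y] by simp
qed

lemma cost_le_r_phi:
  fixes cost :: "'x::finite \<Rightarrow> 'y::finite \<Rightarrow> real"
  assumes "card (UNIV :: 'y set) \<ge> 2" "\<And>x y. cost x y > 0"
  shows "cost x y \<le> r_cost cost * phi cost x"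
  using r_cost_ge[of cost x y] phi_pos[where cost=cost and x=x, OF assms] by (simp add: divide_le_eq)



lemma vs_insert: "version_space H (insert (x,y) S) = {h \<in> version_space H S. h x = y}"
  unfolding version_space_def by auto

lemma vs_Un: "version_space H (S \<union> T) = version_space H S \<inter> version_space H T"
  unfolding version_space_def by auto

lemma vs_sub: "version_space H S \<subseteq> H"
  unfolding version_space_def by auto

lemma fQ_sub:
  fixes f :: "'a set \<Rightarrow> real"
  assumes "mono f" "submodular f" "B' \<subseteq> A'"
  shows "min (f (insert e A')) Q - min (f A') Q \<le> min (f (insert e B')) Q - min (f B') Q"
proof (cases "e \<in> A'")
  case True
  have "f B' \<le> f (insert e B')" using assms(1) by (auto intro: monoD)
  then show ?thesis using True by (simp add: insert_absorb) linarith?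
next
  case False
  have s: "f (A' \<union> insert e B') + f (A' \<inter> insert e B') \<le> f A' + f (insert e B')"
    using assms(2) unfolding submodular_def by blast
  have e1: "A' \<union> insert e B' = insert e A'" using assms(3) by auto
  have e2: "A' \<inter> insert e B' = B'" using assms(3) False by auto
  have m1: "f B' \<le> f A'" using assms(1,3) by (auto intro: monoD)
  have m2: "f A' \<le> f (insert e A')" using assms(1) by (auto intro: monoD)
  have m3: "f B' \<le> f (insert e B')" using assms(1) by (auto intro: monoD)
  show ?thesis using s m1 m2 m3 unfolding e1 e2 by (simp add: min_def)
qed

lemma utility_facts:
  fixes H :: "('x::finite \<Rightarrow> 'y::finite) set"
  assumes "version_space H S \<noteq> {}" "mono f" "\<And>x y. cost x y > 0"
  shows "\<exists>h0\<in>version_space H S. utility H cost f Q x S * cost x (h0 x)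
            = min (f (insert (x, h0 x) S)) Q - min (f S) Q"
    and "\<And>h. h \<in> version_space H S \<Longrightarrow> utility H cost f Q x S * cost x (h x)
            \<le> min (f (insert (x, h x) S)) Q - min (f S) Q"
    and "utility H cost f Q x S \<ge> 0"
proof -
  let ?F = "\<lambda>h. (min (f (insert (x, h x) S)) Q - min (f S) Q) / cost x (h x)"
  have fin: "finite (?F ` version_space H S)" by simp
  have ne: "?F ` version_space H S \<noteq> {}" using assms(1) by simp
  have u: "utility H cost f Q x S = Min (?F ` version_space H S)"
    unfolding utility_def using assms(1) by simp
  obtain h0 where h0: "h0 \<in> version_space H S" "utility H cost f Q x S = ?F h0"
    using Min_in[OF fin ne] u by auto
  have gpos: "min (f (insert (x, h x) S)) Q - min (f S) Q \<ge> 0" for h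
  proof -
    have "f S \<le> f (insert (x, h x) S)" using assms(2) by (auto intro: monoD)
    then show ?thesis by (simp add: min_def)
  qed
  show "\<exists>h0\<in>version_space H S. utility H cost f Q x S * cost x (h0 x)
            = min (f (insert (x, h0 x) S)) Q - min (f S) Q"
    using h0 assms(3)[of x "h0 x"] by (intro bexI[of _ h0]) auto
  show "utility H cost f Q x S \<ge> 0" using h0 gpos[of h0] assms(3)[of x "h0 x"] by simp
  fix h assume h: "h \<in> version_space H S"
  have "utility H cost f Q x S \<le> ?F h" unfolding u using fin h by (intro Min_le) auto
  then show "utility H cost f Q x S * cost x (h x) \<le> min (f (insert (x, h x) S)) Q - min (f S) Q"
    using assms(3)[of x "h x"] by (simp add: le_divide_eq)
qed

definition Umax :: "('x::finite \<Rightarrow> 'y) set \<Rightarrow> ('x \<Rightarrow> 'y \<Rightarrow> real) \<Rightarrow> (('x \<times> 'y) set \<Rightarrow> real) \<Rightarrow> real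
                      \<Rightarrow> ('x \<times> 'y) set \<Rightarrow> real" where
  "Umax H cost f Q S = Max (range (\<lambda>x'. utility H cost f Q x' S))"

lemma Umax_ge: "utility H cost f Q x S \<le> Umax H cost f Q S"
  unfolding Umax_def by (intro Max_ge) auto



context
  fixes H :: "('x::finite \<Rightarrow> 'y::finite) set"
    and cost :: "'x \<Rightarrow> 'y \<Rightarrow> real"
    and f :: "('x \<times> 'y) set \<Rightarrow> real"
    and Q :: real and g :: "('x \<Rightarrow> 'y) set \<Rightarrow> real"
    and B :: "('x, 'y) ialg" and S :: "('x \<times> 'y) set"
  assumes card2: "card (UNIV :: 'y set) \<ge> 2"
    and cpos: "\<And>x y. cost x y > 0"
    and fmono: "mono f" and fsub: "submodular f"
    and gmono: "\<forall>A B. A \<subseteq> B \<longrightarrow> B \<subseteq> H \<longrightarrow> g B \<le> g A"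
    and fg: "\<forall>S. f S = g (version_space H S)"
    and validB: "\<forall>h\<in>H. terminates B h \<and> Q \<le> f (collected B h)"
    and VS: "version_space H S \<noteq> {}"
begin

private abbreviation "R \<equiv> r_cost cost * Umax H cost f Q S"

private lemma R_nonneg: "R \<ge> 0"
proof -
  have "r_cost cost \<ge> 1" by (rule r_cost_ge1[where cost=cost, OF card2 cpos])
  moreover have "Umax H cost f Q S \<ge> 0"
    using utility_facts(3)[where cost=cost and f=f and Q=Q and x=undefined, OF VS fmono cpos] Umax_ge[of H cost f Q undefined S] by linarith
  ultimately show ?thesis by simp
qed

private lemma g_empty: "g {} \<ge> Q"
proof -
  obtain h0 where h0: "h0 \<in> H" using VS vs_sub by blast
  then have "Q \<le> f (collected B h0)" using validB by blast
  also have "\<dots> = g (version_space H (collected B h0))" using fg by blast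
  also have "\<dots> \<le> g {}" using gmono vs_sub by blast
  finally show ?thesis .
qed

private lemma gain_bound:
  "min (f (insert (x, y) (S \<union> T))) Q - min (f (S \<union> T)) Q \<le> Umax H cost f Q S * cost x y"
  if "h0 \<in> version_space H S" "y = h0 x"
    "utility H cost f Q x S * cost x (h0 x) = min (f (insert (x, h0 x) S)) Q - min (f S) Q"
proof -
  have "min (f (insert (x, y) (S \<union> T))) Q - min (f (S \<union> T)) Q
        \<le> min (f (insert (x, y) S)) Q - min (f S) Q"
    by (rule fQ_sub[OF fmono fsub]) auto
  also have "\<dots> = utility H cost f Q x S * cost x y" using that by simp
  also have "\<dots> \<le> Umax H cost f Q S * cost x y"
    using Umax_ge cpos[of x y] by (intro mult_right_mono) auto
  finally show ?thesis .
qed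

lemma claim:
  "card (UNIV::'x set) - card T = n \<Longrightarrow> h1 \<in> H \<Longrightarrow> run B h1 k = T
   \<Longrightarrow> version_space H (S \<union> T) \<noteq> {}
   \<Longrightarrow> \<exists>h''\<in>version_space H (S \<union> T).
         Q - min (f (S \<union> T)) Q + R * set_cost cost T \<le> R * set_cost cost (collected B h'')"
proof (induction n arbitrary: T h1 k rule: less_induct)
  case (less n)
  define W where "W = version_space H (S \<union> T)"
  have WH: "W \<subseteq> H" unfolding W_def by (rule vs_sub)
  have runW: "run B h k = T" if "h \<in> W" for h
  proof -
    have "h \<in> version_space H T" using that unfolding W_def vs_Un by blast
    then have "\<And>x y. (x,y) \<in> run B h1 k \<Longrightarrow> h x = y" using less.prems(3)
      unfolding version_space_def by auto
    then show ?thesis using run_det[of B h1 k h] less.prems(3) by simp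
  qed
  have finT: "finite T" by simp
  have Rn: "R \<ge> 0" by (rule R_nonneg)
  obtain hw where hw: "hw \<in> W" using less.prems(4) W_def by blast
  show ?case
  proof (cases "B T")
    case None
    have "collected B hw = T" using collected_eq[of B hw k] runW[OF hw] None by simp
    moreover have "Q \<le> f (collected B hw)" using validB hw WH by blast
    moreover have "f T \<le> f (S \<union> T)" using fmono by (auto intro: monoD)
    ultimately have "min (f (S \<union> T)) Q = Q" by simp
    then show ?thesis using hw \<open>collected B hw = T\<close> unfolding W_def by auto
  next
    case (Some x)
    have term_hw: "terminates B hw" using validB hw WH by blast
    have fresh: "(x, y) \<notin> T" for y
    proof
      assume a: "(x, y) \<in> T"
      then have "y = hw x" using run_graph[of x y B hw k] runW[OF hw] by simp
      then show False using run_fresh[OF term_hw, of k x] runW[OF hw] Some a by simp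
    qed
    have step: "run B h (Suc k) = insert (x, h x) T" if "h \<in> W" for h
      using runW[OF that] Some by simp
    have cardlt: "card (UNIV::'x set) - card (insert (x, c) T) < n" if "h \<in> W" "h x = c" for h c
    proof -
      have "card (insert (x, c) T) = Suc (card T)" using fresh finT by simp
      moreover have "card (insert (x, c) T) \<le> card (UNIV::'x set)"
        using run_card[of B h "Suc k"] step[OF that(1)] that(2) by simp
      ultimately show ?thesis using less.prems(1) by simp
    qed
    obtain h0 where h0: "h0 \<in> version_space H S"
      "utility H cost f Q x S * cost x (h0 x) = min (f (insert (x, h0 x) S)) Q - min (f S) Q"
      using utility_facts(1)[where cost=cost and f=f and Q=Q and x=x, OF VS fmono cpos] by blast
    define y where "y = h0 x"
    have gb: "min (f (insert (x, y) (S \<union> T))) Q - min (f (S \<union> T)) Q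
              \<le> Umax H cost f Q S * cost x y"
      by (rule gain_bound[OF h0(1) y_def h0(2)])
    show ?thesis
    proof (cases "\<exists>h\<in>W. h x = y")
      case True
      then obtain h where h: "h \<in> W" "h x = y" by blast
      define T' where "T' = insert (x, y) T"
      have VT': "version_space H (S \<union> T') = {h \<in> W. h x = y}"
        unfolding T'_def W_def by (simp add: vs_insert[symmetric])
      obtain h'' where h'': "h'' \<in> version_space H (S \<union> T')"
        "Q - min (f (S \<union> T')) Q + R * set_cost cost T' \<le> R * set_cost cost (collected B h'')"
      proof -
        have hH: "h \<in> H" using h WH by blast
        have ne: "version_space H (S \<union> insert (x, y) T) \<noteq> {}" using VT' h unfolding T'_def by auto
        show ?thesis using less.IH[OF cardlt[OF h] refl hH step[OF h(1), unfolded h(2)] ne] unfolding T'_def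
          by (elim bexE) (rule that[unfolded T'_def], assumption+)
      qed
      have cT': "set_cost cost T' = set_cost cost T + cost x y"
        unfolding T'_def using set_cost_insert[OF finT fresh] by simp
      have "Umax H cost f Q S * cost x y \<le> R * cost x y"
      proof -
        have "Umax H cost f Q S \<le> R"
          using r_cost_ge1[where cost=cost, OF card2 cpos] utility_facts(3)[where cost=cost and f=f and Q=Q and x=x, OF VS fmono cpos] Umax_ge[of H cost f Q x S]
          by (simp add: mult_le_cancel_right1)
        then show ?thesis using cpos[of x y] by (simp add: mult_right_mono)
      qed
      then have "Q - min (f (S \<union> T)) Q + R * set_cost cost T
          \<le> Q - min (f (S \<union> T')) Q + R * set_cost cost T'"
        using gb cT' unfolding T'_def by (simp add: algebra_simps)
      moreover have "h'' \<in> version_space H (S \<union> T)" using h''(1) VT' W_def by auto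
      ultimately show ?thesis using h''(2) by (intro bexI[of _ h'']) linarith+
    next
      case False
      then have "version_space H (insert (x, y) (S \<union> T)) = {}"
        unfolding W_def by (simp add: vs_insert)
      then have "f (insert (x, y) (S \<union> T)) \<ge> Q" using fg g_empty by simp
      then have g1: "Q - min (f (S \<union> T)) Q \<le> Umax H cost f Q S * cost x y" using gb by simp
      have g2: "Umax H cost f Q S * cost x y \<le> R * phi cost x"
      proof -
        have "Umax H cost f Q S * cost x y \<le> Umax H cost f Q S * (r_cost cost * phi cost x)"
          using cost_le_r_phi[where cost=cost and x=x and y=y, OF card2 cpos] utility_facts(3)[where cost=cost and f=f and Q=Q and x=x, OF VS fmono cpos]
            Umax_ge[of H cost f Q x S] by (intro mult_left_mono) auto
        then show ?thesis by (simp add: algebra_simps)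
      qed
      show ?thesis
      proof (cases "\<exists>h\<in>W. phi cost x \<le> cost x (h x)")
        case True
        then obtain h where h: "h \<in> W" "phi cost x \<le> cost x (h x)" by blast
        have "insert (x, h x) T \<subseteq> collected B h"
          using collected_sup[of B h "Suc k"] step[OF h(1)] validB h(1) WH by auto
        then have "set_cost cost (insert (x, h x) T) \<le> set_cost cost (collected B h)"
          by (intro set_cost_mono[OF cpos]) auto
        then have c1: "set_cost cost T + cost x (h x) \<le> set_cost cost (collected B h)"
          using set_cost_insert[OF finT fresh] by simp
        have "R * phi cost x + R * set_cost cost T \<le> R * set_cost cost (collected B h)"
        proof -
          have "R * phi cost x + R * set_cost cost T = R * (phi cost x + set_cost cost T)"
            by (simp add: algebra_simps)
          also have "\<dots> \<le> R * set_cost cost (collected B h)"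
            using c1 h(2) Rn by (intro mult_left_mono) auto
          finally show ?thesis .
        qed
        then show ?thesis using g1 g2 h(1) unfolding W_def by (intro bexI[of _ h]) auto
      next
        case False
        then have cheap: "\<forall>h\<in>W. cost x (h x) < phi cost x" by auto
        define c where "c = hw x"
        have allc: "\<forall>h\<in>W. h x = c"
        proof
          fix h assume h: "h \<in> W"
          show "h x = c"
          proof (rule ccontr)
            assume "h x \<noteq> c"
            then have "phi cost x \<le> cost x (h x) \<or> phi cost x \<le> cost x (hw x)"
              using phi_two[where cost=cost and x=x, OF card2 cpos, of "h x" "hw x"] unfolding c_def by simp
            then show False using cheap h hw by fastforce
          qed
        qed
        define T' where "T' = insert (x, c) T"
        have VT': "version_space H (S \<union> T') = W"
          unfolding T'_def W_def using allc W_def by (auto simp: vs_insert)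
        obtain h'' where h'': "h'' \<in> version_space H (S \<union> T')"
          "Q - min (f (S \<union> T')) Q + R * set_cost cost T' \<le> R * set_cost cost (collected B h'')"
        proof -
          have hH: "hw \<in> H" using hw WH by blast
          have ne: "version_space H (S \<union> insert (x, c) T) \<noteq> {}" using VT' hw unfolding T'_def by auto
          show ?thesis using less.IH[OF cardlt[OF hw c_def[symmetric]] refl hH step[OF hw, folded c_def] ne]
            unfolding T'_def
            by (elim bexE) (rule that[unfolded T'_def], assumption+)
        qed
        have "f (S \<union> T') = f (S \<union> T)" using fg VT' W_def by simp
        moreover have "set_cost cost T \<le> set_cost cost T'"
          unfolding T'_def using set_cost_insert[OF finT fresh, of cost] cpos[of x c] by simp
        then have "R * set_cost cost T \<le> R * set_cost cost T'" using Rn by (intro mult_left_mono)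
        ultimately show ?thesis using h'' VT' W_def by (intro bexI[of _ h'']) auto
      qed
    qed
  qed
qed

lemma key:
  assumes "\<forall>h\<in>H. set_cost cost (collected B h) \<le> M"
  shows "Q - min (f S) Q \<le> R * M"
proof -
  obtain h1 where h1: "h1 \<in> H" using VS vs_sub by blast
  obtain h'' where h'': "h'' \<in> version_space H (S \<union> {})"
    "Q - min (f (S \<union> {})) Q + R * set_cost cost {} \<le> R * set_cost cost (collected B h'')"
    using claim[of "{}" _ h1 0] h1 VS by auto
  have "h'' \<in> H" using h''(1) vs_sub by blast
  then have "R * set_cost cost (collected B h'') \<le> R * M"
    using assms R_nonneg by (intro mult_left_mono) auto
  then show ?thesis using h''(2) by (simp add: set_cost_def)
qed

end



context
  fixes H :: "('x::finite \<Rightarrow> 'y::finite) set"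
    and cost :: "'x \<Rightarrow> 'y \<Rightarrow> real"
    and f :: "('x \<times> 'y) set \<Rightarrow> real"
    and Q \<eta> \<alpha> M :: real and g :: "('x \<Rightarrow> 'y) set \<Rightarrow> real"
    and A B :: "('x, 'y) ialg" and h :: "'x \<Rightarrow> 'y"
  assumes card2: "card (UNIV :: 'y set) \<ge> 2"
    and cpos: "\<And>x y. cost x y > 0"
    and fmono: "mono f" and fsub: "submodular f"
    and gmono: "\<forall>A B. A \<subseteq> B \<longrightarrow> B \<subseteq> H \<longrightarrow> g B \<le> g A"
    and fg: "\<forall>S. f S = g (version_space H S)"
    and validB: "\<forall>h\<in>H. terminates B h \<and> Q \<le> f (collected B h)"
    and Mb: "\<forall>h\<in>H. set_cost cost (collected B h) \<le> M"
    and hH: "h \<in> H"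
    and Qpos: "Q > 0" and etapos: "\<eta> > 0" and f0: "f {} = 0"
    and gap: "\<And>S. f S \<ge> Q - \<eta> \<Longrightarrow> f S \<ge> Q"
    and alpha: "\<alpha> \<ge> 1"
    and greedy: "approx_greedy H cost f Q \<alpha> A"
begin

private abbreviation "SS n \<equiv> run A h n"
private definition "D n = Q - min (f (SS n)) Q"
private definition "cc n = cost (the (A (SS n))) (h (the (A (SS n))))"
private definition "L = \<alpha> * r_cost cost * M"

private lemma h_in_vs: "h \<in> version_space H (SS n)"
  unfolding version_space_def using hH run_graph[of _ _ A h n] by auto

private lemma key_at: "Q - min (f (SS n)) Q \<le> r_cost cost * Umax H cost f Q (SS n) * M"
  by (rule key[where H=H and cost=cost and f=f and Q=Q and g=g and B=B and S="SS n",
        OF card2 cpos fmono fsub gmono fg validB _ Mb]) (use h_in_vs in blast)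

private lemma r1: "r_cost cost \<ge> 1" by (rule r_cost_ge1[where cost=cost, OF card2 cpos])

private lemma Umax_nn: "Umax H cost f Q (SS n) \<ge> 0"
  using utility_facts(3)[where cost=cost and f=f and Q=Q and x=undefined and H=H and S="SS n",
      OF _ fmono cpos] Umax_ge[of H cost f Q undefined "SS n"] h_in_vs by force

private lemma M_pos: "M > 0"
proof (rule ccontr)
  assume "\<not> M > 0"
  then have "r_cost cost * Umax H cost f Q (SS 0) * M \<le> 0"
    using r1 Umax_nn[of 0] by (simp add: mult_nonneg_nonpos)
  then show False using key_at[of 0] f0 Qpos by simp
qed

private lemma L_pos: "L > 0" unfolding L_def using alpha r1 M_pos by simp

private lemma step_facts:
  assumes "A (SS n) = Some x"
  shows "f (SS n) < Q" and "D (Suc n) \<le> D n - D n * cc n / L" and "(x, h x) \<notin> SS n"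
    and "SS (Suc n) = insert (x, h x) (SS n)" and "cc n = cost x (h x)"
proof -
  show fl: "f (SS n) < Q" using greedy assms unfolding approx_greedy_def by (metis option.distinct(1) not_le)
  have ut: "utility H cost f Q x (SS n) \<ge> (1/\<alpha>) * Umax H cost f Q (SS n)"
    using greedy assms fl unfolding approx_greedy_def Umax_def by (metis not_le option.inject)
  show ins: "SS (Suc n) = insert (x, h x) (SS n)" using assms by simp
  show ccx: "cc n = cost x (h x)" unfolding cc_def using assms by simp
  have Dn: "D n = Q - f (SS n)" unfolding D_def using fl by simp
  have Dpos: "D n > 0" using Dn fl by simp
  have gain: "utility H cost f Q x (SS n) * cost x (h x) \<le> min (f (SS (Suc n))) Q - min (f (SS n)) Q"
    using utility_facts(2)[where cost=cost and f=f and Q=Q and x=x and H=H and S="SS n",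
      OF _ fmono cpos h_in_vs] h_in_vs ins by auto
  have "D n \<le> r_cost cost * Umax H cost f Q (SS n) * M" using key_at[of n] Dn fl by simp
  then have "D n / L \<le> Umax H cost f Q (SS n) / \<alpha>"
    unfolding L_def using alpha r1 M_pos by (simp add: divide_le_eq field_simps)
  also have "\<dots> \<le> utility H cost f Q x (SS n)" using ut by simp
  finally have u: "D n / L \<le> utility H cost f Q x (SS n)" .
  then have "D n / L * cost x (h x) \<le> utility H cost f Q x (SS n) * cost x (h x)"
    using cpos[of x "h x"] by (intro mult_right_mono) auto
  then have g2: "D n * cc n / L \<le> min (f (SS (Suc n))) Q - min (f (SS n)) Q"
    using gain ccx by simp
  then show "D (Suc n) \<le> D n - D n * cc n / L" unfolding D_def by simp
  have "D n * cc n / L > 0" using Dpos L_pos ccx cpos[of x "h x"] by simp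
  then have "f (SS (Suc n)) \<noteq> f (SS n)" using g2 by auto
  then show "(x, h x) \<notin> SS n" using ins by (auto simp: insert_absorb)
qed

private lemma not_None_card:
  assumes "\<forall>m<n. A (SS m) \<noteq> None" shows "card (SS n) = n"
  using assms
proof (induction n)
  case 0 then show ?case by simp
next
  case (Suc n)
  then obtain x where x: "A (SS n) = Some x" by blast
  have "card (SS n) = n" using Suc by simp
  then show ?case using step_facts(3,4)[OF x] by simp
qed

private lemma terminates_A: "terminates A h"
proof (rule ccontr)
  assume "\<not> terminates A h"
  then have "\<forall>m. A (SS m) \<noteq> None" unfolding terminates_def by simp
  then have "card (SS (Suc (card (UNIV::'x set)))) = Suc (card (UNIV::'x set))"
    using not_None_card by blast
  then show False using run_card[of A h "Suc (card (UNIV::'x set))"] by simp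
qed

lemma greedy_bound:
  "terminates A h \<and> set_cost cost (collected A h) \<le> r_cost cost * \<alpha> * (ln (Q / \<eta>) + 1) * M"
proof -
  define k where "k = (LEAST m. A (SS m) = None)"
  obtain m0 where "A (SS m0) = None" using terminates_A unfolding terminates_def by blast
  then have kN: "A (SS k) = None" unfolding k_def by (rule LeastI)
  have before: "A (SS m) \<noteq> None" if "m < k" for m using that not_less_Least unfolding k_def by blast
  have coll: "collected A h = SS k" unfolding collected_def k_def by simp
  have k0: "k \<noteq> 0"
  proof
    assume "k = 0"
    then have "A {} = None" using kN by simp
    moreover have "\<not> f {} \<ge> Q" using f0 Qpos by simp
    ultimately show False using greedy unfolding approx_greedy_def by force
  qed
  have some: "A (SS m) = Some (the (A (SS m)))" if "m < k" for m using before[OF that] by auto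
  have costS: "set_cost cost (SS m) = (\<Sum>i<m. cc i)" if "m \<le> k" for m
    using that
  proof (induction m)
    case 0 then show ?case by (simp add: set_cost_def)
  next
    case (Suc m)
    then have s: "A (SS m) = Some (the (A (SS m)))" using some by simp
    have "set_cost cost (SS (Suc m)) = set_cost cost (SS m) + cc m"
      using step_facts(3,4,5)[OF s] set_cost_insert[of "SS m"] by simp
    then show ?case using Suc by simp
  qed
  have Dexp: "D m \<le> Q * exp (- (\<Sum>i<m. cc i) / L)" if "m \<le> k" for m
    using that
  proof (induction m)
    case 0 then show ?case using Qpos by (simp add: D_def f0)
  next
    case (Suc m)
    then have s: "A (SS m) = Some (the (A (SS m)))" using some by simp
    have st: "D (Suc m) \<le> D m - D m * cc m / L" by (rule step_facts(2)[OF s])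
    have Dnn: "D m \<ge> 0" unfolding D_def by simp
    have "D m - D m * cc m / L = D m * (1 - cc m / L)" by (simp add: algebra_simps)
    also have "\<dots> \<le> D m * exp (- (cc m / L))"
      using Dnn exp_ge_add_one_self[of "- (cc m / L)"] by (intro mult_left_mono) auto
    also have "\<dots> \<le> Q * exp (- (\<Sum>i<m. cc i) / L) * exp (- (cc m / L))"
      using Suc Qpos by (intro mult_right_mono) auto
    also have "\<dots> = Q * exp (- (\<Sum>i<Suc m. cc i) / L)"
    proof -
      have "- (\<Sum>i<m. cc i) / L + - (cc m / L) = - (\<Sum>i<Suc m. cc i) / L"
        using L_pos by (simp add: field_simps)
      then show ?thesis by (simp add: mult.assoc exp_add[symmetric])
    qed
    finally show ?case using st by simp
  qed
  define k1 where "k1 = k - 1"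
  have kk: "k = Suc k1" using k0 unfolding k1_def by simp
  have s1: "A (SS k1) = Some (the (A (SS k1)))" using some kk by simp
  have fl: "f (SS k1) < Q" by (rule step_facts(1)[OF s1])
  then have "f (SS k1) < Q - \<eta>" using gap[of "SS k1"] by linarith
  then have etaD: "\<eta> < D k1" unfolding D_def using fl by simp
  have "D k \<ge> 0" unfolding D_def by simp
  then have "0 \<le> D k1 - D k1 * cc k1 / L" using step_facts(2)[OF s1] kk by simp
  then have "D k1 * cc k1 / L \<le> D k1 * 1" by simp
  then have "cc k1 / L \<le> 1" using etaD etapos
    by (metis mult_le_cancel_left_pos order_less_trans times_divide_eq_right)
  then have lastc: "cc k1 \<le> L" using L_pos by (simp add: divide_le_eq)
  define s where "s = (\<Sum>i<k1. cc i)"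
  have "\<eta> < Q * exp (- s / L)" using etaD Dexp[of k1] kk unfolding s_def by simp
  then have "ln \<eta> < ln (Q * exp (- s / L))" using etapos by (intro ln_less_cancel_iff[THEN iffD2]) auto
  also have "\<dots> = ln Q - s / L" using Qpos by (simp add: ln_mult)
  finally have "s / L < ln (Q / \<eta>)" using Qpos etapos by (simp add: ln_div)
  then have sb: "s \<le> L * ln (Q / \<eta>)" using L_pos by (simp add: divide_less_eq mult.commute)
  have "set_cost cost (collected A h) = s + cc k1" unfolding coll s_def using costS[of k] kk by simp
  also have "\<dots> \<le> L * (ln (Q / \<eta>) + 1)" using sb lastc by (simp add: algebra_simps)
  also have "\<dots> = r_cost cost * \<alpha> * (ln (Q / \<eta>) + 1) * M" unfolding L_def by (simp add: algebra_simps)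
  finally show ?thesis using terminates_A by simp
qed

end



theorem theorem1:
  fixes H :: "('x::finite \<Rightarrow> 'y::finite) set"
    and cost :: "'x \<Rightarrow> 'y \<Rightarrow> real"
    and f :: "('x \<times> 'y) set \<Rightarrow> real"
    and Q \<eta> \<alpha> :: real
    and A :: "('x, 'y) ialg"
  assumes "card (UNIV :: 'y set) \<ge> 2"
    and cost_pos: "\<And>x y. cost x y > 0"
    and f_nonneg: "\<And>S. f S \<ge> 0"
    and "Q > 0" and "\<eta> > 0"
    and "mono f" and "submodular f" and "f {} = 0"
    and gap: "\<And>S. f S \<ge> Q - \<eta> \<Longrightarrow> f S \<ge> Q"
    and "\<alpha> \<ge> 1"
    and "approx_greedy H cost f Q \<alpha> A"
    and "learning_objective H f"
  shows "alg_cost H cost A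
           \<le> ereal (r_cost cost * \<alpha> * (ln (Q / \<eta>) + 1)) * OPT H cost f Q"
proof (cases "H = {}")
  case True
  then show ?thesis by (simp add: alg_cost_def)
next
  case Hne: False
  note card2 = assms(1) and Qpos = assms(4) and etapos = assms(5) and fmono = assms(6)
    and fsub = assms(7) and f0 = assms(8) and alpha = assms(10) and greedy = assms(11)
  obtain g where gmono: "\<forall>A B. A \<subseteq> B \<longrightarrow> B \<subseteq> H \<longrightarrow> g B \<le> g A"
    and fg: "\<forall>S. f S = g (version_space H S)"
    using assms(12) unfolding learning_objective_def by blast
  define c where "c = r_cost cost * \<alpha> * (ln (Q / \<eta>) + 1)"
  have etaQ: "\<eta> < Q"
  proof (rule ccontr)
    assume "\<not> \<eta> < Q"
    then have "f {} \<ge> Q - \<eta>" using f0 by simp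
    then show False using gap[of "{}"] f0 Qpos by simp
  qed
  have lnpos: "ln (Q / \<eta>) > 0" using etaQ etapos by simp
  have cpos: "c > 0" unfolding c_def using r_cost_ge1[where cost=cost, OF card2 cost_pos] alpha lnpos
    by (simp add: add_pos_pos)
  have each: "alg_cost H cost A \<le> ereal c * alg_cost H cost B"
    if validB: "\<forall>h\<in>H. terminates B h \<and> Q \<le> f (collected B h)" for B
  proof (cases "alg_cost H cost B = \<infinity>")
    case True
    then show ?thesis using cpos by simp
  next
    case False
    obtain h0 where h0: "h0 \<in> H" using Hne by blast
    have upper: "ereal (set_cost cost (collected B h)) \<le> alg_cost H cost B" if "h \<in> H" for h
    proof -
      have "ereal (set_cost cost (collected B h))
          = (if terminates B h then ereal (set_cost cost (collected B h)) else \<infinity>)"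
        using validB that by simp
      also have "\<dots> \<le> alg_cost H cost B" unfolding alg_cost_def using that by (rule SUP_upper)
      finally show ?thesis .
    qed
    have "alg_cost H cost B \<noteq> -\<infinity>" using upper[OF h0] by auto
    then obtain M where M: "alg_cost H cost B = ereal M" using False by (cases "alg_cost H cost B") auto
    have Mb: "\<forall>h\<in>H. set_cost cost (collected B h) \<le> M" using upper M by simp
    have gb: "terminates A h \<and> set_cost cost (collected A h) \<le> c * M" if "h \<in> H" for h
      using greedy_bound[where H=H and cost=cost and f=f and Q=Q and \<eta>=\<eta> and \<alpha>=\<alpha> and M=M and g=g
          and A=A and B=B and h=h, OF card2 cost_pos fmono fsub gmono fg validB Mb that Qpos etapos f0
          gap alpha greedy]
      unfolding c_def by simp
    have "alg_cost H cost A \<le> ereal (c * M)"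
      unfolding alg_cost_def using gb by (intro SUP_least) auto
    then show ?thesis using M by simp
  qed
  let ?X = "alg_cost H cost A"
  have "?X * ereal (1/c) \<le> OPT H cost f Q"
    unfolding OPT_def
  proof (rule INF_greatest)
    fix B assume "B \<in> {A. \<forall>h\<in>H. terminates A h \<and> Q \<le> f (collected A h)}"
    then have "?X \<le> ereal c * alg_cost H cost B" using each by blast
    then have "?X * ereal (1/c) \<le> ereal c * alg_cost H cost B * ereal (1/c)"
      using cpos by (intro ereal_mult_right_mono) auto
    also have "\<dots> = alg_cost H cost B * (ereal c * ereal (1/c))" by (simp only: ac_simps)
    also have "ereal c * ereal (1/c) = 1" using cpos by (simp add: one_ereal_def)
    also have "alg_cost H cost B * 1 = alg_cost H cost B" by simp
    finally show "?X * ereal (1/c) \<le> alg_cost H cost B" .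
  qed
  then have "?X * ereal (1/c) * ereal c \<le> OPT H cost f Q * ereal c"
    using cpos by (intro ereal_mult_right_mono) auto
  moreover have "?X * ereal (1/c) * ereal c = ?X"
  proof -
    have "ereal (1/c) * ereal c = 1" using cpos by (simp add: one_ereal_def)
    then show ?thesis by (simp only: mult.assoc mult_1_right)
  qed
  ultimately show ?thesis unfolding c_def[symmetric] by (simp add: mult.commute)
qed


end
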